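(* Let $n\ge 5$ and let $G$ be an almost simple primitive permutation group with socle $G_0=\mathrm{PSU}_n(q)$ acting on the set $X$ of all non-degenerate $1$-dimensional subspaces of the natural module $V_n(q^2)$. Then $\mathrm{diam}(X,G)=2$.
   Context: $V_n(q^2)$ carries a non-degenerate hermitian (unitary) form $f$; a $1$-space $\langle v\rangle$ is non-degenerate iff $f(v,v)\ne 0$. An (undirected) orbital graph of $(X,G)$ is a graph on $X$ whose edge set is a single $G$-orbit on unordered $2$-subsets of $X$, and $\mathrm{diam}(X,G)$ is the maximum diameter of all such orbital graphs. *)

theory Defs
  imports "HOL-Analysis.Analysis" "HOL-Library.Extended_Nat"
begin

text \<open>Standard non-degenerate hermitian form on V_n(q^2) = 'k^'n, with CARD('k) = q^2:
  f(u,v) = sum_i u_i * v_i^q.\<close>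
definition herm :: "nat \<Rightarrow> ('k::field)^'n \<Rightarrow> 'k^'n \<Rightarrow> 'k" where
  "herm q u v = (\<Sum>i\<in>UNIV. u$i * (v$i)^q)"

definition span1 :: "('k::field)^'n \<Rightarrow> ('k^'n) set" where
  "span1 v = {(\<chi> i. c * v$i) | c. True}"

definition nondeg_points :: "nat \<Rightarrow> (('k::field)^'n) set set" where
  "nondeg_points q = {span1 v | v. herm q v v \<noteq> 0}"

definition field_aut :: "('k::field \<Rightarrow> 'k) \<Rightarrow> bool" where
  "field_aut \<sigma> \<longleftrightarrow> bij \<sigma> \<and> (\<forall>x y. \<sigma> (x + y) = \<sigma> x + \<sigma> y) \<and> (\<forall>x y. \<sigma> (x * y) = \<sigma> x * \<sigma> y)"

definition GammaU :: "nat \<Rightarrow> (('k::field)^'n \<Rightarrow> 'k^'n) set" where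
  "GammaU q = {(\<lambda>v. A *v (\<chi> i. \<sigma> (v$i))) | A \<sigma>. field_aut \<sigma> \<and>
     (\<exists>m. m \<noteq> 0 \<and> (\<forall>u v. herm q (A *v (\<chi> i. \<sigma> (u$i))) (A *v (\<chi> i. \<sigma> (v$i)))
                          = m * \<sigma> (herm q u v)))}"

definition SU :: "nat \<Rightarrow> (('k::field)^'n \<Rightarrow> 'k^'n) set" where
  "SU q = {(\<lambda>v. A *v v) | A. det A = 1 \<and> (\<forall>u v. herm q (A *v u) (A *v v) = herm q u v)}"

definition induced :: "'p set set \<Rightarrow> ('p \<Rightarrow> 'p) \<Rightarrow> 'p set \<Rightarrow> 'p set" where
  "induced X g = (\<lambda>P. if P \<in> X then g ` P else P)"

definition primitive_on :: "'x set \<Rightarrow> ('x \<Rightarrow> 'x) set \<Rightarrow> bool" where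
  "primitive_on X G \<longleftrightarrow> (\<forall>x\<in>X. \<forall>y\<in>X. \<exists>g\<in>G. g x = y) \<and>
     (\<forall>B. B \<subseteq> X \<longrightarrow> (\<forall>g\<in>G. g ` B = B \<or> g ` B \<inter> B = {}) \<longrightarrow> card B \<le> 1 \<or> B = X)"

fun reach :: "'x set set \<Rightarrow> nat \<Rightarrow> 'x \<Rightarrow> 'x \<Rightarrow> bool" where
  "reach E 0 x y = (x = y)"
| "reach E (Suc k) x y = (\<exists>z. {x, z} \<in> E \<and> reach E k z y)"

definition gdist :: "'x set set \<Rightarrow> 'x \<Rightarrow> 'x \<Rightarrow> enat" where
  "gdist E x y = (if \<exists>k. reach E k x y then enat (LEAST k. reach E k x y) else \<infinity>)"

definition graph_diam :: "'x set \<Rightarrow> 'x set set \<Rightarrow> enat" where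
  "graph_diam X E = (SUP x\<in>X. SUP y\<in>X. gdist E x y)"

definition orbital_edge_sets :: "'x set \<Rightarrow> ('x \<Rightarrow> 'x) set \<Rightarrow> 'x set set set" where
  "orbital_edge_sets X G = {{g ` A | g. g \<in> G} | A. A \<subseteq> X \<and> card A = 2}"

definition action_diam :: "'x set \<Rightarrow> ('x \<Rightarrow> 'x) set \<Rightarrow> enat" where
  "action_diam X G = (SUP E\<in>orbital_edge_sets X G. graph_diam X E)"

end

theory Submission
  imports Defs "HOL-Computational_Algebra.Primes" "HOL-Computational_Algebra.Polynomial"
begin


lemma of_nat_CARD_zero: "of_nat CARD('a::{comm_ring_1,finite}) = (0::'a)"
proof -
  have "(\<Sum>x\<in>(UNIV::'a set). x + 1) = (\<Sum>x\<in>UNIV. x)"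
    by (rule sum.reindex_bij_witness[of _ "\<lambda>y. y - 1" "\<lambda>y. y + 1"]) auto
  moreover have "(\<Sum>x\<in>(UNIV::'a set). x + 1) = (\<Sum>x\<in>UNIV. x) + of_nat CARD('a)"
    by (simp add: sum.distrib)
  ultimately show ?thesis by simp
qed

lemma CHAR_eq_p:
  assumes "prime p" "CARD('a::{field,finite}) = p ^ m"
  shows "CHAR('a) = p"
proof -
  have "CHAR('a) dvd p ^ m"
    using of_nat_CARD_zero[where 'a='a] assms(2) of_nat_eq_0_iff_char_dvd by metis
  moreover have "0 < CHAR('a)" by (rule finite_imp_CHAR_pos) simp
  hence "prime CHAR('a)" by (rule prime_CHAR_semidom)
  ultimately show ?thesis using assms(1)
    by (metis prime_dvd_power primes_dvd_imp_eq)
qed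

lemma power_card_same: "(x::'a::{field,finite}) ^ CARD('a) = x"
proof (cases "x = 0")
  case False
  have "x * (\<Prod>y\<in>UNIV-{0}. x * y) = x * x ^ (card (UNIV :: 'a set) - 1) * \<Prod>(UNIV-{0})"
    by (simp add: prod.distrib mult_ac)
  also have "x * x ^ (card (UNIV :: 'a set) - 1) = x ^ Suc (card (UNIV :: 'a set) - 1)"
    by (subst power_Suc) auto
  also have "Suc (card (UNIV :: 'a set) - 1) = card (UNIV :: 'a set)"
    using finite_UNIV_card_ge_0[where ?'a = 'a] by simp
  also have "(\<Prod>y\<in>UNIV-{0}. x * y) = (\<Prod>y\<in>UNIV-{0}. y)"
    by (rule prod.reindex_bij_witness[of _ "\<lambda>y. y / x" "\<lambda>y. x * y"]) (use False in auto)
  finally show ?thesis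
    by simp
qed (use finite_UNIV_card_ge_0[where ?'a = 'a] in auto)

definition Hq :: "'k::{field,finite} itself \<Rightarrow> nat \<Rightarrow> bool" where
  "Hq T q \<longleftrightarrow> CARD('k) = q^2 \<and> 2 \<le> q \<and> (\<forall>x y::'k. (x+y)^q = x^q + y^q)"

context
  fixes q :: nat
  assumes H: "Hq TYPE('k::{field,finite}) q"
begin

lemma Hq_card: "CARD('k) = q^2" using H unfolding Hq_def by auto
lemma Hq_q2: "2 \<le> q" using H unfolding Hq_def by auto
lemma cj_add: "((x::'k)+y)^q = x^q + y^q" using H unfolding Hq_def by auto
lemma cj_mult: "((x::'k)*y)^q = x^q * y^q" by (simp add: power_mult_distrib)
lemma cj_cj: "((x::'k)^q)^q = x"
  by (metis Hq_card power2_eq_square power_card_same power_mult)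
lemma cj_0: "(0::'k)^q = 0" using Hq_q2 by simp
lemma cj_1: "(1::'k)^q = 1" by simp
lemma cj_minus: "(-(x::'k))^q = - (x^q)"
proof -
  have "(-x)^q + x^q = 0" using cj_add[of "-x" x] cj_0 by simp
  thus ?thesis by (simp add: eq_neg_iff_add_eq_0)
qed
lemma cj_diff: "((x::'k) - y)^q = x^q - y^q"
  using cj_add[of x "-y"] cj_minus[of y] by simp
lemma cj_eq0: "((x::'k)^q = 0) \<longleftrightarrow> x = 0" using Hq_q2 by simp
lemma cj_inj: "((x::'k)^q = y^q) \<longleftrightarrow> x = y" by (metis cj_cj)
lemma cj_inverse: "(inverse (x::'k))^q = inverse (x^q)" by (simp add: power_inverse)
lemma cj_divide: "((x::'k) / y)^q = x^q / y^q" by (simp add: power_divide)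
lemma cj_sum: "(sum (f::_\<Rightarrow>'k) A)^q = sum (\<lambda>i. (f i)^q) A"
  by (induction A rule: infinite_finite_induct) (auto simp: cj_add cj_0)
lemma cj_prod: "(prod (f::_\<Rightarrow>'k) A)^q = prod (\<lambda>i. (f i)^q) A"
  by (simp add: prod_power_distrib)
lemma cj_of_int_sign: "(of_int (sign p)::'k)^q = of_int (sign p)"
  by (cases "sign p = 1") (auto simp: sign_def cj_minus)

lemma nm_fixed: "((x::'k) * x^q)^q = x * x^q"
  by (simp add: cj_mult cj_cj mult.commute)
lemma nm_eq0: "((x::'k) * x^q = 0) \<longleftrightarrow> x = 0" using Hq_q2 by auto

lemma card_roots_pow:
  assumes "m \<ge> 1"
  shows "card {x::'k. x^m = 1} \<le> m"
proof -
  define P :: "'k poly" where "P = monom 1 m - 1"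
  have cP: "coeff P m = 1" using assms by (simp add: P_def coeff_monom)
  hence "P \<noteq> 0" by auto
  have "degree P \<le> m" unfolding P_def
    by (metis degree_diff_le degree_monom_le degree_1 le0)
  have "{x::'k. x^m = 1} = {x. poly P x = 0}" by (auto simp: P_def poly_monom)
  thus ?thesis using card_poly_roots_bound[OF \<open>P \<noteq> 0\<close>] \<open>degree P \<le> m\<close> by simp
qed

lemma norm_facts:
  "(\<forall>t::'k. t \<noteq> 0 \<longrightarrow> t^q = t \<longrightarrow> (\<exists>x. x * x^q = t)) \<and> card {x::'k. x^(q+1) = 1} = q+1"
proof -
  define U where "U = (UNIV - {0::'k})"
  define K where "K = {x::'k. x^(q+1) = 1}"
  define F where "F = {t::'k. t \<noteq> 0 \<and> t^q = t}"
  define I where "I = (\<lambda>x::'k. x^(q+1)) ` U"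
  have q2: "2 \<le> q" by (rule Hq_q2)
  have cK: "card K \<le> q+1" unfolding K_def by (rule card_roots_pow) simp
  have "F \<subseteq> {t. t^(q-1) = 1}"
  proof
    fix t assume "t \<in> F"
    hence "t \<noteq> 0" "t * t^(q-1) = t * 1" using q2
      by (auto simp: F_def simp flip: power_Suc)
    thus "t \<in> {t. t^(q-1) = 1}" by simp
  qed
  moreover have "card {t::'k. t^(q-1) = 1} \<le> q - 1" using q2 by (intro card_roots_pow) simp
  ultimately have cF: "card F \<le> q - 1"
    by (meson card_mono finite order_trans)
  have IF: "I \<subseteq> F"
  proof
    fix t assume "t \<in> I"
    then obtain x where x: "x \<noteq> 0" "t = x^(q+1)" by (auto simp: I_def U_def)
    have "t^q = (x * x^q)^q" using x by (simp add: mult.commute)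
    also have "\<dots> = x * x^q" by (rule nm_fixed)
    finally show "t \<in> F" using x by (auto simp: F_def mult.commute)
  qed
  have cU: "card U = q^2 - 1" using Hq_card by (simp add: U_def card_Diff_singleton)
  have fib: "card {x\<in>U. x^(q+1) = t} = card K" if "t \<in> I" for t
  proof -
    obtain x0 where x0: "x0 \<noteq> 0" "t = x0^(q+1)" using \<open>t \<in> I\<close> by (auto simp: I_def U_def)
    have "{x\<in>U. x^(q+1) = t} = (\<lambda>k. x0 * k) ` K"
    proof (intro set_eqI iffI)
      fix x assume "x \<in> {x\<in>U. x^(q+1) = t}"
      hence "x \<noteq> 0" "x^(q+1) = t" by (auto simp: U_def)
      hence "x = x0 * (x/x0)" "(x/x0)^(q+1) = 1" using x0 by (auto simp: power_divide)
      thus "x \<in> (\<lambda>k. x0 * k) ` K" unfolding K_def by blast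
    next
      fix x assume "x \<in> (\<lambda>k. x0 * k) ` K"
      then obtain k where "k^(q+1) = 1" "x = x0 * k" by (auto simp: K_def)
      thus "x \<in> {x\<in>U. x^(q+1) = t}" using x0 by (auto simp: U_def power_mult_distrib)
    qed
    moreover have "inj_on (\<lambda>k. x0 * k) K" using x0 by (auto simp: inj_on_def)
    ultimately show ?thesis by (simp add: card_image)
  qed
  have "U = (\<Union>t\<in>I. {x\<in>U. x^(q+1) = t})" by (auto simp: I_def)
  moreover have "card (\<Union>t\<in>I. {x\<in>U. x^(q+1) = t}) = (\<Sum>t\<in>I. card {x\<in>U. x^(q+1) = t})"
    by (rule card_UN_disjoint) auto
  ultimately have "card U = (\<Sum>t\<in>I. card {x\<in>U. x^(q+1) = t})" by simp
  also have "\<dots> = card I * card K" using fib by simp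
  finally have eq: "card I * card K = (q - 1) * (q + 1)" using cU
    by (simp add: power2_eq_square algebra_simps)
  have cI: "card I \<le> q - 1" using cF card_mono[OF _ IF] by (meson finite order_trans)
  have q1: "q - 1 > 0" using q2 by simp
  have "card I = q - 1 \<and> card K = q + 1"
  proof (rule ccontr)
    assume "\<not> ?thesis"
    hence "card I < q - 1 \<or> card K < q + 1" using cI cK by linarith
    hence "card I * card K < (q-1)*(q+1)"
    proof
      assume "card I < q - 1"
      moreover have "card K > 0" by (auto simp: K_def card_gt_0_iff intro: exI[of _ 1])
      ultimately show ?thesis using cK by (intro mult_less_le_imp_less) auto
    next
      assume "card K < q + 1"
      show ?thesis
      proof (cases "card I = 0")
        case True thus ?thesis using q1 by simp
      next
        case False thus ?thesis using cI \<open>card K < q + 1\<close> by (intro mult_le_less_imp_less) auto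
      qed
    qed
    thus False using eq by simp
  qed
  hence "card F \<le> card I" using cF by simp
  moreover have "card I \<le> card F" using IF by (intro card_mono) auto
  ultimately have "I = F" using IF by (intro card_subset_eq) auto
  have "\<forall>t::'k. t \<noteq> 0 \<longrightarrow> t^q = t \<longrightarrow> (\<exists>x. x * x^q = t)"
  proof (intro allI impI)
    fix t :: 'k assume "t \<noteq> 0" "t^q = t"
    hence "t \<in> I" using \<open>I = F\<close> by (simp add: F_def)
    then obtain x where "t = x^(q+1)" by (auto simp: I_def)
    hence "t = x * x^q" by (simp add: mult.commute)
    thus "\<exists>x. x * x^q = t" by blast
  qed
  thus ?thesis using \<open>card I = q - 1 \<and> card K = q + 1\<close> K_def by blast
qed

lemma norm_surj: "(t::'k) \<noteq> 0 \<Longrightarrow> t^q = t \<Longrightarrow> \<exists>x. x * x^q = t"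
  using norm_facts by blast

lemma norm_surj0: "(t::'k)^q = t \<Longrightarrow> \<exists>x. x * x^q = t"
  using norm_surj by (cases "t = 0") (auto intro: exI[of _ 0] simp: cj_0)

lemma exists_zeta: "\<exists>z::'k. z * z^q = 1 \<and> z \<noteq> 1"
proof -
  have "card {x::'k. x^(q+1) = 1} = q+1" using norm_facts by blast
  hence "card {x::'k. x^(q+1) = 1} > card {1::'k}" using Hq_q2 by simp
  then obtain z where "z \<in> {x::'k. x^(q+1) = 1}" "z \<notin> {1}"
    by (metis card_mono finite not_le subsetI)
  thus ?thesis by (auto simp: mult.commute)
qed

end


context
  fixes q :: nat
  assumes H: "Hq TYPE('k::{field,finite}) q"
begin

lemmas cj_add'_p1 = cj_add[OF H] and cj_cj'_p1 = cj_cj[OF H] and cj_0'_p1 = cj_0[OF H]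
  and cj_minus'_p1 = cj_minus[OF H] and cj_diff'_p1 = cj_diff[OF H] and cj_eq0'_p1 = cj_eq0[OF H]
  and cj_inj'_p1 = cj_inj[OF H] and cj_sum'_p1 = cj_sum[OF H] and cj_divide'_p1 = cj_divide[OF H]
  and cj_sign'_p1 = cj_of_int_sign[OF H] and nm_fixed'_p1 = nm_fixed[OF H] and nm_eq0'_p1 = nm_eq0[OF H]
  and cj_inverse'_p1 = cj_inverse[OF H]

lemma herm_add_left: "herm q (u + v) (w::'k^'n) = herm q u w + herm q v w"
  by (simp add: herm_def distrib_right sum.distrib)
lemma herm_add_right: "herm q (u::'k^'n) (v + w) = herm q u v + herm q u w"
  by (simp add: herm_def cj_add'_p1 distrib_left sum.distrib)
lemma herm_scale_left: "herm q (c *s u) (w::'k^'n) = c * herm q u w"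
  by (simp add: herm_def sum_distrib_left mult.assoc)
lemma herm_scale_right: "herm q (u::'k^'n) (c *s w) = c^q * herm q u w"
  by (simp add: herm_def sum_distrib_left power_mult_distrib mult_ac)
lemma herm_sym: "herm q (v::'k^'n) u = (herm q u v)^q"
  by (simp add: herm_def cj_sum'_p1 power_mult_distrib cj_cj'_p1 mult.commute)
lemma herm_neg_left: "herm q (- u) (w::'k^'n) = - herm q u w"
  by (simp add: herm_def sum_negf)
lemma herm_neg_right: "herm q (u::'k^'n) (- w) = - herm q u w"
  by (simp add: herm_def sum_negf cj_minus'_p1)
lemma herm_diff_left: "herm q (u - v) (w::'k^'n) = herm q u w - herm q v w"
  using herm_add_left[of u "-v" w] herm_neg_left[of v w] by simp
lemma herm_diff_right: "herm q (u::'k^'n) (v - w) = herm q u v - herm q u w"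
  using herm_add_right[of u v "-w"] herm_neg_right[of u w] by simp
lemma herm_zero_left[simp]: "herm q 0 (w::'k^'n) = 0" by (simp add: herm_def)
lemma herm_zero_right[simp]: "herm q (u::'k^'n) 0 = 0" by (simp add: herm_def cj_0'_p1)
lemma herm_self_fixed: "(herm q (u::'k^'n) u)^q = herm q u u"
  using herm_sym[of u u] by simp
lemma herm_axis_right: "herm q (u::'k^'n) (axis i 1) = u$i"
proof -
  have "herm q u (axis i 1) = (\<Sum>j\<in>UNIV. if j = i then u$i else 0)"
    unfolding herm_def by (intro sum.cong) (auto simp: axis_def cj_0'_p1)
  thus ?thesis by simp
qed
lemma herm_axis_left: "herm q (axis i 1) (u::'k^'n) = (u$i)^q"
  by (simp only: herm_sym[of "axis i 1" u] herm_axis_right)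
lemma herm_nondeg: "(\<And>y. herm q (x::'k^'n) y = 0) \<Longrightarrow> x = 0"
  by (metis herm_axis_right vec_eq_iff zero_index)

definition unitary :: "'k^'n^'n \<Rightarrow> bool" where
  "unitary A \<longleftrightarrow> (\<forall>u v. herm q (A *v u) (A *v v) = herm q u v)"

definition adjm :: "'k^'n^'n \<Rightarrow> 'k^'n^'n" where
  "adjm A = (\<chi> i j. (A$j$i)^q)"

lemma herm_adj: "herm q (A *v u) v = herm q u (adjm A *v v)"
proof -
  have "herm q (A *v u) v = (\<Sum>i\<in>UNIV. \<Sum>j\<in>UNIV. A$i$j * u$j * (v$i)^q)"
    by (simp add: herm_def matrix_vector_mult_def sum_distrib_right)
  also have "\<dots> = (\<Sum>j\<in>UNIV. \<Sum>i\<in>UNIV. A$i$j * u$j * (v$i)^q)" by (rule sum.swap)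
  also have "\<dots> = herm q u (adjm A *v v)"
    by (simp add: herm_def matrix_vector_mult_def adjm_def sum_distrib_left cj_sum'_p1
        power_mult_distrib cj_cj'_p1 mult_ac)
  finally show ?thesis .
qed

lemma unitary_adj_left:
  assumes "unitary A" shows "adjm A *v (A *v v) = v"
proof -
  have "herm q (adjm A *v (A *v v) - v) y = 0" for y
  proof -
    have "herm q (adjm A *v (A *v v)) y = (herm q y (adjm A *v (A *v v)))^q"
      by (rule herm_sym)
    also have "herm q y (adjm A *v (A *v v)) = herm q (A *v y) (A *v v)"
      by (simp add: herm_adj)
    also have "\<dots> = herm q y v" using assms by (simp add: unitary_def)
    also have "(herm q y v)^q = herm q v y" by (simp add: herm_sym[of v y])
    finally show ?thesis by (simp add: herm_diff_left)
  qed
  hence "adjm A *v (A *v v) - v = 0" by (rule herm_nondeg)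
  thus ?thesis by simp
qed

lemma det_adjm: "det (adjm A) = (det A)^q"
proof -
  have "adjm A = transpose (\<chi> i j. (A$i$j)^q)"
    by (simp add: adjm_def transpose_def)
  hence "det (adjm A) = det (\<chi> i j. (A$i$j)^q)" by (simp add: det_transpose)
  also have "\<dots> = (det A)^q"
    by (simp add: det_def cj_sum'_p1 power_mult_distrib cj_sign'_p1 prod_power_distrib)
  finally show ?thesis .
qed

lemma unitary_comp: "unitary A \<Longrightarrow> unitary B \<Longrightarrow> unitary (A ** B)"
  by (simp add: unitary_def flip: matrix_vector_mul_assoc)

lemma unitary_det: assumes "unitary A" shows "det A * (det A)^q = 1"
proof -
  have "adjm A ** A = mat 1"
    by (simp add: matrix_eq unitary_adj_left[OF assms] flip: matrix_vector_mul_assoc)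
  hence "det (adjm A) * det A = 1" by (metis det_I det_mul)
  thus ?thesis by (simp add: det_adjm mult.commute)
qed

lemma unitary_adj_right: assumes "unitary A" shows "A *v (adjm A *v v) = v"
proof -
  have "inj ((*v) A)" by (metis injI unitary_adj_left[OF assms])
  hence "surj ((*v) A)" by (simp add: finite_UNIV_inj_surj)
  then obtain w where "v = A *v w" by blast
  thus ?thesis by (simp add: unitary_adj_left[OF assms])
qed

lemma unitary_adj: assumes "unitary A" shows "unitary (adjm A)"
  unfolding unitary_def
proof (intro allI)
  fix u v
  have "herm q (adjm A *v u) (adjm A *v v) = herm q (A *v (adjm A *v u)) (A *v (adjm A *v v))"
    using assms by (simp add: unitary_def)
  thus "herm q (adjm A *v u) (adjm A *v v) = herm q u v" by (simp add: unitary_adj_right[OF assms])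
qed

definition diagm :: "'n \<Rightarrow> 'k \<Rightarrow> 'k^'n^'n" where
  "diagm l d = (\<chi> i j. if i = j then (if i = l then d else 1) else 0)"

lemma diagm_mult: "diagm l d *v y = (\<chi> i. (if i = l then d else 1) * y$i)"
proof -
  have "(\<Sum>j\<in>UNIV. (if i = j then (if i = l then d else 1) else 0) * y$j) = (if i = l then d else 1) * y$i" for i
    by (simp add: if_distrib[of "\<lambda>x. x * _"] sum.delta cong: if_cong)
  thus ?thesis by (simp add: diagm_def matrix_vector_mult_def)
qed

lemma diagm_fix: "y$l = 0 \<Longrightarrow> diagm l d *v y = y"
  by (simp add: diagm_mult vec_eq_iff)

lemma det_diagm: "det (diagm l d) = d"
proof -
  have "det (diagm l d) = (\<Prod>i\<in>UNIV. (if i = l then d else 1))"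
    by (subst det_diagonal) (auto simp: diagm_def)
  also have "\<dots> = d" by (simp add: prod.delta)
  finally show ?thesis .
qed

lemma unitary_diagm: assumes "d * d^q = 1" shows "unitary (diagm (l::'n::finite) d)"
  unfolding unitary_def herm_def diagm_mult
proof (intro allI, intro sum.cong refl)
  fix u v :: "'k^'n" and i :: 'n
  show "(\<chi> i. (if i = l then d else 1) * u $ i) $ i * ((\<chi> i. (if i = l then d else 1) * v $ i) $ i) ^ q =
         u $ i * v $ i ^ q"
  proof (cases "i = l")
    case True
    have "d * u$i * (d^q * (v$i)^q) = (d * d^q) * (u$i * (v$i)^q)" by (simp only: mult_ac)
    thus ?thesis using True assms by (simp add: power_mult_distrib)
  qed simp
qed

lemma fix_det:
  assumes "unitary A"
  shows "\<exists>B. unitary B \<and> det B = 1 \<and> (\<forall>y. (A *v y)$l = 0 \<longrightarrow> B *v y = A *v y)"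
proof -
  define d where "d = det A"
  have dd: "d * d^q = 1" using unitary_det[OF assms] by (simp add: d_def)
  hence "d \<noteq> 0" by auto
  have "inverse d * (inverse d)^q = 1" using dd by (simp add: power_inverse flip: inverse_mult_distrib)
  hence u: "unitary (diagm l (inverse d))" by (rule unitary_diagm)
  show ?thesis
  proof (intro exI conjI allI impI)
    show "unitary (diagm l (inverse d) ** A)" by (rule unitary_comp[OF u assms])
    show "det (diagm l (inverse d) ** A) = 1" using \<open>d \<noteq> 0\<close> by (simp add: det_mul det_diagm d_def)
    fix y assume "(A *v y)$l = 0"
    thus "(diagm l (inverse d) ** A) *v y = A *v y" by (simp add: diagm_fix flip: matrix_vector_mul_assoc)
  qed
qed

definition reflm :: "'k^'n \<Rightarrow> 'k \<Rightarrow> 'k^'n^'n" where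
  "reflm a c = mat 1 + (\<chi> i j. c * a$i * (a$j)^q)"

lemma reflm_mult: "reflm a c *v x = x + (c * herm q x a) *s a"
proof -
  have "(\<chi> i j. c * a$i * (a$j)^q) *v x = (c * herm q x a) *s a"
    by (simp add: matrix_vector_mult_def herm_def vec_eq_iff sum_distrib_left mult_ac)
  thus ?thesis by (simp add: reflm_def matrix_vector_mult_add_rdistrib)
qed

lemma refl_exists:
  fixes u v :: "'k^'n"
  assumes "herm q u u = herm q v v" "herm q u v \<noteq> herm q u u"
  shows "\<exists>A. unitary A \<and> A *v u = v \<and> (\<forall>y. herm q y u = 0 \<longrightarrow> herm q y v = 0 \<longrightarrow> A *v y = y)"
proof -
  define a where "a = v - u"
  define d where "d = herm q u a"
  define c where "c = inverse d"
  have d0: "d \<noteq> 0" using assms(2) by (simp add: d_def a_def herm_diff_right)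
  have cd0: "d^q \<noteq> 0" using d0 cj_eq0'_p1 by auto
  have key: "d + d^q + herm q a a = 0"
  proof -
    have e1: "d^q = herm q a u" by (simp add: d_def herm_sym[of a u])
    have e2: "herm q a a = herm q v a - d" by (simp add: a_def d_def herm_diff_left)
    have e3: "herm q a u + herm q v a = 0"
      using assms(1) by (simp add: a_def herm_diff_left herm_diff_right herm_sym[of v u])
    have "d + d^q + herm q a a = herm q a u + herm q v a" unfolding e1 e2 by algebra
    thus ?thesis using e3 by simp
  qed
  have br: "c^q + c + c * c^q * herm q a a = 0"
  proof -
    have "c^q + c + c * c^q * herm q a a = (d + d^q + herm q a a) / (d * d^q)"
      using d0 cd0 by (simp add: c_def cj_inverse'_p1 field_simps)
    thus ?thesis using key by simp
  qed
  show ?thesis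
  proof (intro exI conjI allI impI)
    show "unitary (reflm a c)" unfolding unitary_def reflm_mult
    proof (intro allI)
      fix x y :: "'k^'n"
      have "herm q (x + (c * herm q x a) *s a) (y + (c * herm q y a) *s a) =
        herm q x y + herm q x a * (herm q y a)^q * (c^q + c + c * c^q * herm q a a)"
        by (simp add: herm_add_left herm_add_right herm_scale_left herm_scale_right
            herm_sym[of a y] power_mult_distrib cj_cj'_p1 algebra_simps)
      thus "herm q (x + (c * herm q x a) *s a) (y + (c * herm q y a) *s a) = herm q x y"
        using br by simp
    qed
    have "c * herm q u a = 1" using d0 by (simp add: c_def d_def)
    hence "reflm a c *v u = u + a" by (simp add: reflm_mult)
    thus "reflm a c *v u = v" by (simp add: a_def)
    fix y assume "herm q y u = 0" "herm q y v = 0"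
    thus "reflm a c *v y = y" by (simp add: reflm_mult a_def herm_diff_right)
  qed
qed

end


context
  fixes q :: nat
  assumes H: "Hq TYPE('k::{field,finite}) q"
begin

lemmas cj_add'_p2 = cj_add[OF H] and cj_cj'_p2 = cj_cj[OF H] and cj_0'_p2 = cj_0[OF H]
  and cj_minus'_p2 = cj_minus[OF H] and cj_diff'_p2 = cj_diff[OF H] and cj_eq0'_p2 = cj_eq0[OF H]
  and cj_inj'_p2 = cj_inj[OF H] and cj_sum'_p2 = cj_sum[OF H] and cj_divide'_p2 = cj_divide[OF H]
  and nm_fixed'_p2 = nm_fixed[OF H] and nm_eq0'_p2 = nm_eq0[OF H]
  and cj_inverse'_p2 = cj_inverse[OF H]
  and herm_add_left_p2 = herm_add_left[OF H] and herm_add_right_p2 = herm_add_right[OF H]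
  and herm_scale_left_p2 = herm_scale_left[OF H] and herm_scale_right_p2 = herm_scale_right[OF H]
  and herm_sym_p2 = herm_sym[OF H] and herm_diff_left_p2 = herm_diff_left[OF H]
  and herm_diff_right_p2 = herm_diff_right[OF H] and herm_self_fixed_p2 = herm_self_fixed[OF H]
  and herm_nondeg_p2 = herm_nondeg[OF H] and refl_exists_p2 = refl_exists[OF H]
  and fix_det_p2 = fix_det[OF H] and unitary_comp_p2 = unitary_comp[OF H]
  and herm_zero_left_p2 = herm_zero_left[OF H] and herm_zero_right_p2 = herm_zero_right[OF H]

lemma herm_axis_r: "herm q (u::'k^'n) (axis i c) = u$i * c^q"
proof -
  have "herm q u (axis i c) = (\<Sum>j\<in>UNIV. if j = i then u$i * c^q else 0)"
    unfolding herm_def by (intro sum.cong) (auto simp: axis_def cj_0'_p2)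
  thus ?thesis by simp
qed
lemma herm_axis_l: "herm q (axis i c) (u::'k^'n) = c * (u$i)^q"
proof -
  have "herm q (axis i c) u = (\<Sum>j\<in>UNIV. if j = i then c * (u$i)^q else 0)"
    unfolding herm_def by (intro sum.cong) (auto simp: axis_def)
  thus ?thesis by simp
qed
lemma axis_idx: "axis i c $ j = (if j = i then c else 0)" by (simp add: axis_def)

lemma one_step:
  fixes u c e :: "'k^'n"
  assumes "herm q u u = herm q c c" "herm q u c \<noteq> herm q u u"
    "herm q e u = 0" "herm q e c = 0" "c$l = 0" "e$l = 0"
  shows "\<exists>B. unitary q B \<and> det B = 1 \<and> B *v u = c \<and> B *v e = e"
proof -
  obtain A where A: "unitary q A" "A *v u = c" "\<forall>y. herm q y u = 0 \<longrightarrow> herm q y c = 0 \<longrightarrow> A *v y = y"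
    using refl_exists_p2[OF assms(1,2)] by blast
  have Ae: "A *v e = e" using A(3) assms(3,4) by blast
  obtain B where B: "unitary q B" "det B = 1" "\<forall>y. (A *v y)$l = 0 \<longrightarrow> B *v y = A *v y"
    using fix_det_p2[OF A(1), of l] by blast
  show ?thesis using A(2) Ae B assms(5,6) by metis
qed

lemma two_step:
  fixes u v c e :: "'k^'n"
  assumes "herm q u u = herm q v v" "herm q v v = herm q c c"
    "herm q u v \<noteq> herm q u u" "herm q v c \<noteq> herm q v v"
    "herm q e u = 0" "herm q e v = 0" "herm q e c = 0" "c$l = 0" "e$l = 0"
  shows "\<exists>B. unitary q B \<and> det B = 1 \<and> B *v u = c \<and> B *v e = e"
proof -
  obtain A1 where A1: "unitary q A1" "A1 *v u = v" "\<forall>y. herm q y u = 0 \<longrightarrow> herm q y v = 0 \<longrightarrow> A1 *v y = y"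
    using refl_exists_p2[OF assms(1,3)] by blast
  obtain A2 where A2: "unitary q A2" "A2 *v v = c" "\<forall>y. herm q y v = 0 \<longrightarrow> herm q y c = 0 \<longrightarrow> A2 *v y = y"
    using refl_exists_p2[OF assms(2,4)] by blast
  define A where "A = A2 ** A1"
  have A: "unitary q A" "A *v u = c" "A *v e = e"
    using A1 A2 assms(5,6,7) unitary_comp_p2 by (auto simp: A_def simp flip: matrix_vector_mul_assoc)
  obtain B where B: "unitary q B" "det B = 1" "\<forall>y. (A *v y)$l = 0 \<longrightarrow> B *v y = A *v y"
    using fix_det_p2[OF A(1), of l] by blast
  show ?thesis using A(2,3) B assms(8,9) by metis
qed

lemma trans_nondeg:
  fixes u e :: "'k^'n"
  assumes "herm q u u = g * g^q" "g \<noteq> 0" "herm q e u = 0" "e$j = 0" "e$l = 0" "l \<noteq> j"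
  shows "\<exists>B. unitary q B \<and> det B = 1 \<and> B *v u = axis j g \<and> B *v e = e"
proof -
  define t where "t = g * g^q"
  have t0: "t \<noteq> 0" using assms(2) nm_eq0'_p2 by (simp add: t_def)
  have cc: "herm q (axis j g) (axis j g) = t" by (simp add: herm_axis_r axis_idx t_def)
  have ec: "herm q e (axis j g) = 0" using assms(4) by (simp add: herm_axis_r)
  have cl: "axis j g $ l = 0" using assms(6) by (simp add: axis_idx)
  show ?thesis
  proof (cases "herm q u (axis j g) = t")
    case False
    thus ?thesis using one_step[of u "axis j g" e l] assms cc ec cl by (simp add: t_def)
  next
    case True
    obtain z :: 'k where z: "z * z^q = 1" "z \<noteq> 1" using exists_zeta[OF H] by blast
    have zq: "z^q \<noteq> 1" using z(2) cj_inj'_p2[of z 1] by simp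
    define v where "v = axis j (z * g)"
    have vv: "herm q v v = t"
      by (simp add: v_def herm_axis_r axis_idx t_def power_mult_distrib)
         (metis (no_types, lifting) mult.assoc mult.left_commute mult_1 z(1))
    have "herm q u v = z^q * t" using True by (simp add: v_def herm_axis_r power_mult_distrib mult_ac)
    hence uv: "herm q u v \<noteq> t" using zq t0 by simp
    have "herm q v (axis j g) = z * t" by (simp add: v_def herm_axis_r axis_idx t_def mult_ac)
    hence vc: "herm q v (axis j g) \<noteq> t" using z(2) t0 by simp
    have ev: "herm q e v = 0" using assms(4) by (simp add: v_def herm_axis_r)
    show ?thesis
      by (rule two_step[of u v "axis j g" e l]) (use assms cc vv uv vc ev ec cl in \<open>simp_all add: t_def\<close>)
  qed
qed

lemma trans_iso:
  fixes u e :: "'k^'n"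
  assumes "herm q u u = 0" "u \<noteq> 0" "w * w^q = -1" "j \<noteq> k" "l \<noteq> j" "l \<noteq> k"
    "herm q e u = 0" "e$j = 0" "e$k = 0" "e$l = 0" "\<forall>p. u$p \<noteq> 0 \<longrightarrow> e$p = 0"
  shows "\<exists>B. unitary q B \<and> det B = 1 \<and> B *v u = axis j 1 + axis k w \<and> B *v e = e"
proof -
  define c where "c = axis j 1 + axis k w"
  have cc: "herm q c c = 0" using assms(3,4)
    by (simp add: c_def herm_add_left_p2 herm_add_right_p2 herm_axis_r herm_axis_l axis_idx cj_0'_p2)
  have ec: "herm q e c = 0" using assms(8,9)
    by (simp add: c_def herm_add_right_p2 herm_axis_r)
  have cl: "c $ l = 0" using assms(5,6) by (simp add: c_def axis_idx)
  have uc: "herm q u c = u$j + u$k * w^q" by (simp add: c_def herm_add_right_p2 herm_axis_r)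
  obtain z :: 'k where z: "z * z^q = 1" "z \<noteq> 1" using exists_zeta[OF H] by blast
  have zq: "z^q \<noteq> 1" using z(2) cj_inj'_p2[of z 1] by simp
  have w0: "w \<noteq> 0" using assms(3) by auto
  have wq0: "w^q \<noteq> 0" using w0 cj_eq0'_p2 by simp
  have nzw: "(z * w) * (z * w)^q = -1" using z(1) assms(3)
    by (simp add: power_mult_distrib) (metis mult.assoc mult.left_commute mult_1 mult_minus1_right)
  show ?thesis
  proof (cases "herm q u c = 0")
    case False
    thus ?thesis using one_step[of u c e l] assms cc ec cl by (simp add: c_def)
  next
    case True
    hence uj: "u$j = - (u$k * w^q)" using uc by (simp add: eq_neg_iff_add_eq_0)
    show ?thesis
    proof (cases "\<exists>p. p \<noteq> j \<and> p \<noteq> k \<and> u$p \<noteq> 0")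
      case True
      then obtain p where p: "p \<noteq> j" "p \<noteq> k" "u$p \<noteq> 0" by blast
      have ep: "e$p = 0" using assms(11) p(3) by blast
      obtain w' where w': "w' * w'^q = -1" "u$p * w'^q + u$j \<noteq> 0"
      proof (cases "u$p * w^q + u$j = 0")
        case False thus ?thesis using that assms(3) by blast
      next
        case True
        have "u$p * (z*w)^q + u$j = u$p * w^q * (z^q - 1)"
          using True by (simp add: power_mult_distrib algebra_simps eq_neg_iff_add_eq_0)
        moreover have "u$p * w^q * (z^q - 1) \<noteq> 0" using p(3) wq0 zq by simp
        ultimately show ?thesis using that nzw by metis
      qed
      define v where "v = axis p w' + axis j 1"
      have vv: "herm q v v = 0" using p w'(1)
        by (simp add: v_def herm_add_left_p2 herm_add_right_p2 herm_axis_r herm_axis_l axis_idx cj_0'_p2)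
      have uv: "herm q u v \<noteq> 0" using w'(2) by (simp add: v_def herm_add_right_p2 herm_axis_r)
      have vc: "herm q v c \<noteq> 0" using p assms(4)
        by (simp add: v_def c_def herm_add_left_p2 herm_add_right_p2 herm_axis_r herm_axis_l axis_idx cj_0'_p2)
      have ev: "herm q e v = 0" using ep assms(8) by (simp add: v_def herm_add_right_p2 herm_axis_r)
      show ?thesis
        by (rule two_step[of u v c e l, unfolded c_def])
           (use assms cc vv uv vc ev ec cl in \<open>simp_all add: c_def\<close>)
    next
      case False
      hence up: "\<forall>p. p \<noteq> j \<longrightarrow> p \<noteq> k \<longrightarrow> u$p = 0" by blast
      have uk: "u$k \<noteq> 0"
      proof
        assume "u$k = 0"
        hence "u$j = 0" using uj by simp
        hence "u = 0" using up \<open>u$k = 0\<close> by (metis vec_eq_iff zero_index)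
        thus False using assms(2) by simp
      qed
      define v where "v = axis j 1 + axis k (z * w)"
      have vv: "herm q v v = 0" using assms(4) nzw
        by (simp add: v_def herm_add_left_p2 herm_add_right_p2 herm_axis_r herm_axis_l axis_idx cj_0'_p2)
      have "herm q u v = u$k * w^q * (z^q - 1)" using uj
        by (simp add: v_def herm_add_right_p2 herm_axis_r power_mult_distrib algebra_simps)
      hence uv: "herm q u v \<noteq> 0" using uk wq0 zq by simp
      have "herm q v c = 1 - z" using assms(4) assms(3)
        by (simp add: v_def c_def herm_add_left_p2 herm_add_right_p2 herm_axis_r herm_axis_l axis_idx cj_0'_p2
            power_mult_distrib cj_cj'_p2 mult.assoc)
      hence vc: "herm q v c \<noteq> 0" using z(2) by simp
      have ev: "herm q e v = 0" using assms(8,9) by (simp add: v_def herm_add_right_p2 herm_axis_r)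
      show ?thesis
        by (rule two_step[of u v c e l, unfolded c_def])
           (use assms cc vv uv vc ev ec cl in \<open>simp_all add: c_def\<close>)
    qed
  qed
qed

end


lemma span1_alt: "span1 v = range (\<lambda>c. c *s v)"
  by (auto simp: span1_def vector_scalar_mult_def)
lemma span1_self: "v \<in> span1 v"
  unfolding span1_alt using rangeI[of "\<lambda>c. c *s v" 1] by simp
lemma span1_scale: "(c::'a::field) \<noteq> 0 \<Longrightarrow> span1 (c *s v) = span1 (v::'a^'n)"
  unfolding span1_alt
proof (intro set_eqI iffI)
  fix x assume "c \<noteq> 0" "x \<in> range (\<lambda>d. d *s (c *s v))"
  thus "x \<in> range (\<lambda>c. c *s v)" by (auto simp: vector_smult_assoc)
next
  fix x assume c: "c \<noteq> 0" "x \<in> range (\<lambda>c. c *s v)"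
  then obtain d where "x = d *s v" by auto
  hence "x = (d / c) *s (c *s v)" using c(1) by (simp add: vector_smult_assoc)
  thus "x \<in> range (\<lambda>d. d *s (c *s v))" by blast
qed
lemma gm_span1: "(\<lambda>v. A *v v) ` span1 v = span1 (A *v v)"
  unfolding span1_alt by (auto simp: vector_scalar_commute image_iff)
lemma span1_eqD: "span1 a = span1 b \<Longrightarrow> \<exists>c. b = c *s a"
  using span1_self[of b] unfolding span1_alt by auto

context
  fixes q :: nat
  assumes H: "Hq TYPE('k::{field,finite}) q"
begin

lemmas cj_add'_p3 = cj_add[OF H] and cj_cj'_p3 = cj_cj[OF H] and cj_0'_p3 = cj_0[OF H]
  and cj_minus'_p3 = cj_minus[OF H] and cj_diff'_p3 = cj_diff[OF H] and cj_eq0'_p3 = cj_eq0[OF H]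
  and cj_inj'_p3 = cj_inj[OF H] and cj_sum'_p3 = cj_sum[OF H] and cj_divide'_p3 = cj_divide[OF H]
  and nm_fixed'_p3 = nm_fixed[OF H] and nm_eq0'_p3 = nm_eq0[OF H]
  and cj_inverse'_p3 = cj_inverse[OF H]
  and herm_add_left_p3 = herm_add_left[OF H] and herm_add_right_p3 = herm_add_right[OF H]
  and herm_scale_left_p3 = herm_scale_left[OF H] and herm_scale_right_p3 = herm_scale_right[OF H]
  and herm_sym_p3 = herm_sym[OF H] and herm_diff_left_p3 = herm_diff_left[OF H]
  and herm_diff_right_p3 = herm_diff_right[OF H] and herm_self_fixed_p3 = herm_self_fixed[OF H]
  and herm_nondeg_p3 = herm_nondeg[OF H]
  and unitary_comp_p3 = unitary_comp[OF H]
  and herm_zero_left_p3 = herm_zero_left[OF H] and herm_zero_right_p3 = herm_zero_right[OF H]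
  and herm_axis_r_p3 = herm_axis_r[OF H] and herm_axis_l_p3 = herm_axis_l[OF H]
  and trans_nondeg_p3 = trans_nondeg[OF H] and trans_iso_p3 = trans_iso[OF H]
  and unitary_adj_left_p3 = unitary_adj_left[OF H] and unitary_adj_right_p3 = unitary_adj_right[OF H]
  and unitary_adj_p3 = unitary_adj[OF H] and det_adjm_p3 = det_adjm[OF H]

definition gam :: "'k \<Rightarrow> 'k" where "gam t = (SOME x. x * x^q = t)"

lemma gam: assumes "t \<noteq> 0" "t^q = t" shows "gam t * (gam t)^q = t" "gam t \<noteq> 0"
proof -
  show "gam t * (gam t)^q = t" unfolding gam_def by (rule someI_ex) (rule norm_surj[OF H assms])
  thus "gam t \<noteq> 0" using assms(1) by auto
qed

definition om :: 'k where "om = (SOME w. w * w^q = -1)"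

lemma om: "om * om^q = -1"
proof -
  have m: "(-1::'k)^q = -1" using cj_minus'_p3[of 1] by simp
  have n1: "(-1::'k) \<noteq> 0" by simp
  have "\<exists>w::'k. w * w^q = -1" using norm_surj[OF H n1 m] .
  thus ?thesis unfolding om_def by (rule someI_ex)
qed

definition cz :: "'n \<Rightarrow> 'n \<Rightarrow> 'k \<Rightarrow> 'k^'n" where
  "cz i2 i3 s = (if s = 0 then axis i2 1 + axis i3 om else axis i2 (gam s))"

definition rho :: "'k^'n \<Rightarrow> 'k^'n \<Rightarrow> 'k" where
  "rho a b = herm q a a * herm q b b / (herm q a b * herm q b a) - 1"

definition Kp :: "'n \<Rightarrow> 'n \<Rightarrow> 'n \<Rightarrow> 'k^'n \<Rightarrow> 'k^'n \<Rightarrow> 'k^'n" where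
  "Kp i1 i2 i3 a b = (if herm q a b = 0 then axis i2 1 else axis i1 1 + cz i2 i3 (rho a b))"

definition sumat :: "'k^'n^'n \<Rightarrow> bool" where
  "sumat A \<longleftrightarrow> unitary q A \<and> det A = 1"

lemma sumat_adj: assumes "sumat A" shows "sumat (adjm q A)" "\<And>x. adjm q A *v (A *v x) = x"
proof -
  show "sumat (adjm q A)" using assms unfolding sumat_def
    by (simp add: det_adjm_p3 unitary_adj_p3)
  show "\<And>x. adjm q A *v (A *v x) = x" using assms unfolding sumat_def
    by (simp add: unitary_adj_left_p3)
qed

lemma sumat_comp: "sumat A \<Longrightarrow> sumat B \<Longrightarrow> sumat (A ** B)"
  unfolding sumat_def by (simp add: unitary_comp_p3 det_mul)

lemma unitary_inj: fixes A :: "'k^'n^'n" assumes "unitary q A" "A *v x = A *v y" shows "x = y"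
proof -
  have "adjm q A *v (A *v x) = adjm q A *v (A *v y)" using assms(2) by simp
  thus ?thesis by (simp only: unitary_adj_left_p3[OF assms(1)])
qed

lemma cz_props:
  assumes "i2 \<noteq> i3" "s^q = s"
  shows "herm q (cz i2 i3 s) (cz i2 i3 s) = s" "cz i2 i3 s \<noteq> 0" "\<And>i. i \<noteq> i2 \<Longrightarrow> i \<noteq> i3 \<Longrightarrow> cz i2 i3 s $ i = 0"
proof -
  show "herm q (cz i2 i3 s) (cz i2 i3 s) = s"
  proof (cases "s = 0")
    case True
    thus ?thesis using assms om
      by (simp add: cz_def herm_add_left_p3 herm_add_right_p3 herm_axis_l_p3 herm_axis_r_p3 axis_idx[OF H] cj_0'_p3)
  next
    case False
    thus ?thesis using assms gam[of s]
      by (simp add: cz_def herm_axis_l_p3 axis_idx[OF H])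
  qed
  show "cz i2 i3 s \<noteq> 0"
  proof (cases "s = 0")
    case True
    hence "cz i2 i3 s $ i2 = 1" using assms by (simp add: cz_def axis_idx[OF H])
    thus ?thesis by (metis zero_index zero_neq_one)
  next
    case False
    hence "cz i2 i3 s $ i2 \<noteq> 0" using assms gam[of s] by (simp add: cz_def axis_idx[OF H])
    thus ?thesis by (metis zero_index)
  qed
  show "\<And>i. i \<noteq> i2 \<Longrightarrow> i \<noteq> i3 \<Longrightarrow> cz i2 i3 s $ i = 0"
    by (simp add: cz_def axis_idx[OF H])
qed

lemma axis_scale: "axis i (c::'k) = c *s (axis i 1 :: 'k^'n)"
  by (simp add: vec_eq_iff axis_def)

lemma canon:
  fixes a b :: "'k^'n"
  assumes idx: "i1 \<noteq> i2" "i1 \<noteq> i3" "i1 \<noteq> i4" "i2 \<noteq> i3" "i2 \<noteq> i4" "i3 \<noteq> i4"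
    and ha: "herm q a a \<noteq> 0" and hb: "herm q b b \<noteq> 0" and ab: "span1 a \<noteq> span1 b"
  shows "\<exists>A. sumat A \<and> span1 (A *v axis i1 1) = span1 a \<and> span1 (A *v Kp i1 i2 i3 a b) = span1 b"
proof -
  define e1 :: "'k^'n" where "e1 = axis i1 1"
  define ta where "ta = herm q a a"
  define g1 where "g1 = gam ta"
  have g1: "g1 * g1^q = ta" "g1 \<noteq> 0" using gam[of ta] ha herm_self_fixed_p3[of a] by (auto simp: ta_def g1_def)
  have g1q: "g1^q \<noteq> 0" using g1(2) cj_eq0'_p3 by simp
  obtain B1 where B1: "unitary q B1" "det B1 = 1" "B1 *v a = axis i1 g1"
    using trans_nondeg_p3[of a g1 0 i1 i2] g1 idx by (auto simp: ta_def herm_zero_left_p3)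
  define b1 where "b1 = B1 *v b"
  define al where "al = b1 $ i1"
  define w where "w = b1 - axis i1 al"
  have wi1: "w $ i1 = 0" by (simp add: w_def al_def axis_idx[OF H])
  have hew: "herm q e1 w = 0" using wi1 by (simp add: e1_def herm_axis_l_p3 cj_0'_p3)
  have hwe: "herm q w e1 = 0" using wi1 by (simp add: e1_def herm_axis_r_p3)
  have hab: "herm q a b = g1 * al^q"
  proof -
    have "herm q a b = herm q (B1 *v a) (B1 *v b)" using B1(1) by (simp add: unitary_def[OF H])
    thus ?thesis by (simp add: B1(3) herm_axis_l_p3 b1_def al_def)
  qed
  have b1w: "b1 = al *s e1 + w" by (simp add: w_def e1_def axis_scale[of i1 al])
  have hbb: "herm q b b = herm q b1 b1" using B1(1) by (simp add: unitary_def[OF H] b1_def)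
  have A0a: "\<And>B2. B2 *v e1 = e1 \<Longrightarrow> (B2 ** B1) *v a = g1 *s e1"
    by (simp flip: matrix_vector_mul_assoc add: B1(3) axis_scale[of i1 g1] e1_def vector_scalar_commute)
  have final: "\<exists>A. sumat A \<and> span1 (A *v e1) = span1 a \<and> span1 (A *v K) = span1 b"
    if "sumat A0" "A0 *v a = g1 *s e1" "A0 *v b = be *s K" "be \<noteq> 0" for A0 be K
  proof -
    define A where "A = adjm q A0"
    have sA: "sumat A" using sumat_adj[OF that(1)] by (simp add: A_def)
    have "A *v (g1 *s e1) = a" using sumat_adj(2)[OF that(1), of a] that(2) by (simp add: A_def)
    hence "g1 *s (A *v e1) = a" by (simp add: vector_scalar_commute)
    hence "span1 (A *v e1) = span1 a" using span1_scale[OF g1(2)] by metis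
    moreover have "A *v (be *s K) = b" using sumat_adj(2)[OF that(1), of b] that(3) by (simp add: A_def)
    hence "be *s (A *v K) = b" by (simp add: vector_scalar_commute)
    hence "span1 (A *v K) = span1 b" using span1_scale[OF that(4)] by metis
    ultimately show ?thesis using sA by blast
  qed
  show ?thesis
  proof (cases "herm q a b = 0")
    case True
    hence "al^q = 0" using hab g1(2) by simp
    hence al0: "al = 0" using cj_eq0'_p3 by simp
    hence b1e: "b1 = w" by (simp add: w_def)
    define tb where "tb = herm q w w"
    have tb0: "tb \<noteq> 0" "tb^q = tb" using hb hbb b1e herm_self_fixed_p3[of w] by (auto simp: tb_def)
    define g2 where "g2 = gam tb"
    have g2: "g2 * g2^q = tb" "g2 \<noteq> 0" using gam[OF tb0] by (auto simp: g2_def)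
    obtain B2 where B2: "unitary q B2" "det B2 = 1" "B2 *v w = axis i2 g2" "B2 *v e1 = e1"
      using trans_nondeg_p3[of w g2 e1 i2 i3] g2 idx hew by (auto simp: tb_def e1_def axis_idx[OF H])
    have "sumat (B2 ** B1)" using B1 B2 by (simp add: sumat_def unitary_comp_p3 det_mul)
    moreover have "(B2 ** B1) *v b = g2 *s axis i2 1"
      by (simp flip: matrix_vector_mul_assoc b1_def add: b1e B2(3) axis_scale[of i2 g2])
    ultimately have "\<exists>A. sumat A \<and> span1 (A *v e1) = span1 a \<and> span1 (A *v axis i2 1) = span1 b"
      using final[of "B2 ** B1" g2 "axis i2 1"] A0a[OF B2(4)] g2(2) by blast
    thus ?thesis using True by (simp add: Kp_def e1_def)
  next
    case False
    hence al0: "al \<noteq> 0" using hab cj_0'_p3 by (metis mult_zero_right)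
    hence alq: "al^q \<noteq> 0" using cj_eq0'_p3 by simp
    define w' where "w' = (1/al) *s w"
    have ww': "w = al *s w'" using al0 by (simp add: w'_def vector_smult_assoc)
    have w'0: "w' \<noteq> 0"
    proof
      assume "w' = 0"
      hence "b1 = al *s e1" using b1w ww' by simp
      also have "\<dots> = (al / g1) *s (g1 *s e1)" using g1(2) by (simp add: vector_smult_assoc)
      also have "g1 *s e1 = B1 *v a" using B1(3) by (simp add: e1_def axis_scale[of i1 g1])
      finally have "B1 *v b = B1 *v ((al / g1) *s a)" by (simp add: b1_def vector_scalar_commute)
      hence "b = (al / g1) *s a" using unitary_inj[OF B1(1)] by blast
      hence "span1 b = span1 a" using span1_scale[of "al/g1" a] al0 g1(2) by simp
      thus False using ab by simp
    qed
    have w'i1: "w' $ i1 = 0" using wi1 by (simp add: w'_def)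
    have hew': "herm q e1 w' = 0" using w'i1 by (simp add: e1_def herm_axis_l_p3 cj_0'_p3)
    have hwe': "herm q w' e1 = 0" using w'i1 by (simp add: e1_def herm_axis_r_p3)
    define s where "s = herm q w' w'"
    have sq: "s^q = s" using herm_self_fixed_p3[of w'] by (simp add: s_def)
    obtain B2 where B2: "unitary q B2" "det B2 = 1" "B2 *v w' = cz i2 i3 s" "B2 *v e1 = e1"
    proof (cases "s = 0")
      case True
      have "\<forall>p. w'$p \<noteq> 0 \<longrightarrow> e1$p = 0" using w'i1 by (auto simp: e1_def axis_idx[OF H])
      then obtain B where "unitary q B" "det B = 1" "B *v w' = axis i2 1 + axis i3 om" "B *v e1 = e1"
        using trans_iso_p3[of w' om i2 i3 i4 e1] True w'0 om idx hew' by (auto simp: s_def e1_def axis_idx[OF H])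
      thus ?thesis using that True by (simp add: cz_def)
    next
      case False
      have gs: "gam s * (gam s)^q = s" "gam s \<noteq> 0" using gam[OF False sq] by auto
      obtain B where "unitary q B" "det B = 1" "B *v w' = axis i2 (gam s)" "B *v e1 = e1"
        using trans_nondeg_p3[of w' "gam s" e1 i2 i3] gs idx hew' by (auto simp: s_def e1_def axis_idx[OF H])
      thus ?thesis using that False by (simp add: cz_def)
    qed
    have b1w': "b1 = al *s (e1 + w')" using b1w ww' by (simp add: vector_add_ldistrib)
    have "sumat (B2 ** B1)" using B1 B2 by (simp add: sumat_def unitary_comp_p3 det_mul)
    moreover have "(B2 ** B1) *v b = al *s (e1 + cz i2 i3 s)"
      by (simp flip: matrix_vector_mul_assoc b1_def add: b1w' vector_scalar_commute
          matrix_vector_right_distrib B2(3,4))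
    ultimately have ex: "\<exists>A. sumat A \<and> span1 (A *v e1) = span1 a \<and> span1 (A *v (e1 + cz i2 i3 s)) = span1 b"
      using final[of "B2 ** B1" al "e1 + cz i2 i3 s"] A0a[OF B2(4)] al0 by blast
    have hee: "herm q e1 e1 = 1" by (simp add: e1_def herm_axis_l_p3 axis_idx[OF H])
    have "herm q b1 b1 = (al * al^q) * (1 + s)"
      using hee hew' hwe' by (simp add: b1w' herm_scale_left_p3 herm_scale_right_p3 herm_add_left_p3 herm_add_right_p3 s_def algebra_simps)
    hence tb: "herm q b b = (al * al^q) * (1 + s)" using hbb by simp
    have hba: "herm q b a = g1^q * al" using hab herm_sym_p3[of b a] by (simp add: power_mult_distrib cj_cj'_p3)
    have "rho a b = s"
      unfolding rho_def using g1 g1q al0 alq ha[folded ta_def]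
      by (simp add: hab hba tb flip: ta_def)
    thus ?thesis using ex False by (simp add: Kp_def e1_def)
  qed
qed

end


lemma span1_neq: "(x::'a::field^'n) $ i = 0 \<Longrightarrow> y $ i \<noteq> 0 \<Longrightarrow> span1 x \<noteq> span1 y"
  using span1_eqD[of x y] by auto

context
  fixes q :: nat
  assumes H: "Hq TYPE('k::{field,finite}) q"
begin

lemmas cj_add'_p4 = cj_add[OF H] and cj_cj'_p4 = cj_cj[OF H] and cj_0'_p4 = cj_0[OF H]
  and cj_minus'_p4 = cj_minus[OF H] and cj_diff'_p4 = cj_diff[OF H] and cj_eq0'_p4 = cj_eq0[OF H]
  and cj_inj'_p4 = cj_inj[OF H] and cj_divide'_p4 = cj_divide[OF H]
  and nm_fixed'_p4 = nm_fixed[OF H] and nm_eq0'_p4 = nm_eq0[OF H]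
  and herm_add_left_p4 = herm_add_left[OF H] and herm_add_right_p4 = herm_add_right[OF H]
  and herm_scale_left_p4 = herm_scale_left[OF H] and herm_scale_right_p4 = herm_scale_right[OF H]
  and herm_sym_p4 = herm_sym[OF H] and herm_self_fixed_p4 = herm_self_fixed[OF H]
  and herm_axis_r_p4 = herm_axis_r[OF H] and herm_axis_l_p4 = herm_axis_l[OF H]
  and axis_idx_p4 = axis_idx[OF H] and cz_props_p4 = cz_props[OF H] and gam_p4 = gam[OF H] and om_p4 = om[OF H]
  and rho_def_p4 = rho_def[OF H] and Kp_def_p4 = Kp_def[OF H] and cz_def_p4 = cz_def[OF H]

definition same_type :: "'k^'n \<Rightarrow> 'k^'n \<Rightarrow> 'k^'n \<Rightarrow> 'k^'n \<Rightarrow> bool" where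
  "same_type a b u v \<longleftrightarrow> (herm q a b = 0 \<longleftrightarrow> herm q u v = 0) \<and> (herm q a b \<noteq> 0 \<longrightarrow> rho q a b = rho q u v)"

lemma rho_props:
  fixes a b :: "'k^'n"
  assumes "herm q a a \<noteq> 0" "herm q b b \<noteq> 0" "herm q a b \<noteq> 0"
  shows "(rho q a b)^q = rho q a b" "1 + rho q a b \<noteq> 0"
proof -
  define h where "h = herm q a b"
  have hq: "h^q \<noteq> 0" using assms(3) cj_eq0'_p4 by (simp add: h_def)
  have r: "1 + rho q a b = herm q a a * herm q b b / (h * h^q)"
    by (simp add: rho_def_p4 h_def herm_sym_p4[of b a])
  show "1 + rho q a b \<noteq> 0" using r assms hq by (simp add: h_def)
  have "(1 + rho q a b)^q = 1 + rho q a b"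
    unfolding r using herm_self_fixed_p4[of a] herm_self_fixed_p4[of b]
    by (simp add: cj_divide'_p4 power_mult_distrib cj_cj'_p4 mult.commute)
  thus "(rho q a b)^q = rho q a b" by (simp add: cj_add'_p4)
qed

lemma Kp_cases:
  fixes a b :: "'k^'n"
  assumes "herm q a a \<noteq> 0" "herm q b b \<noteq> 0"
  shows "(herm q a b = 0 \<and> Kp q i1 i2 i3 a b = axis i2 1) \<or>
    (herm q a b \<noteq> 0 \<and> Kp q i1 i2 i3 a b = axis i1 1 + cz q i2 i3 (rho q a b))"
  by (simp add: Kp_def_p4)

lemma same_type_Kp: "same_type a b u v \<Longrightarrow> Kp q i1 i2 i3 a b = Kp q i1 i2 i3 u v"
  by (auto simp: same_type_def Kp_def_p4)

lemma K_nondeg: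
  fixes a b :: "'k^'n"
  assumes "herm q a a \<noteq> 0" "herm q b b \<noteq> 0" "i1 \<noteq> i2" "i1 \<noteq> i3" "i2 \<noteq> i3"
  shows "herm q (Kp q i1 i2 i3 a b) (Kp q i1 i2 i3 a b) \<noteq> 0"
proof (cases "herm q a b = 0")
  case True thus ?thesis by (simp add: Kp_def_p4 herm_axis_l_p4 axis_idx_p4)
next
  case False
  define s where "s = rho q a b"
  have s: "s^q = s" "1 + s \<noteq> 0" using rho_props[OF assms(1,2) False] by (auto simp: s_def)
  have c: "herm q (cz q i2 i3 s) (cz q i2 i3 s) = s" "cz q i2 i3 s $ i1 = 0"
    using cz_props_p4[OF assms(5) s(1)] assms by auto
  have "herm q (axis i1 1 + cz q i2 i3 s) (axis i1 1 + cz q i2 i3 s) = 1 + s"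
    using c by (simp add: herm_add_left_p4 herm_add_right_p4 herm_axis_l_p4 herm_axis_r_p4 axis_idx_p4 cj_0'_p4)
  thus ?thesis using False s by (simp add: Kp_def_p4 s_def)
qed

lemma cz_i2: "i2 \<noteq> i3 \<Longrightarrow> (s::'k)^q = s \<Longrightarrow> (cz q i2 i3 s :: 'k^'n) $ i2 \<noteq> 0"
  using gam_p4[of s] by (auto simp: cz_def_p4 axis_idx_p4)

lemma core:
  fixes u v K :: "'k^'n"
  assumes idx: "i1 \<noteq> i2" "i1 \<noteq> i3" "i1 \<noteq> i4" "i2 \<noteq> i3" "i2 \<noteq> i4" "i3 \<noteq> i4"
    and hu: "herm q u u \<noteq> 0" and hv: "herm q v v \<noteq> 0"
    and K: "K = axis i2 1 \<or> (\<exists>s. s^q = s \<and> 1 + s \<noteq> 0 \<and> K = axis i1 1 + cz q i2 i3 s)"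
  shows "(same_type (axis i1 1) K u v \<and> span1 (axis i1 1) \<noteq> span1 K) \<or>
    (\<exists>z. herm q z z \<noteq> 0 \<and> same_type (axis i1 1) z u v \<and> span1 (axis i1 1) \<noteq> span1 z \<and>
         same_type z K u v \<and> span1 z \<noteq> span1 K)"
proof -
  define e1 :: "'k^'n" where "e1 = axis i1 1"
  have [simp]: "axis i c $ j = (if j = i then c else 0)" for i j and c :: 'k by (rule axis_idx_p4)
  note hs = herm_add_left_p4 herm_add_right_p4 herm_axis_l_p4 herm_axis_r_p4 cj_0'_p4
  show ?thesis
  proof (cases "herm q u v = 0")
    case h0: True
    show ?thesis
    proof (cases "K = axis i2 1")
      case True
      define z :: "'k^'n" where "z = axis i3 1"
      have "herm q z z \<noteq> 0" "same_type e1 z u v" "span1 e1 \<noteq> span1 z" "same_type z K u v" "span1 z \<noteq> span1 K"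
        using idx h0 True span1_neq[of e1 i3 z] span1_neq[of K i3 z]
        by (auto simp: z_def e1_def same_type_def hs)
      thus ?thesis unfolding e1_def by blast
    next
      case False
      then obtain s where s: "s^q = s" "1 + s \<noteq> 0" "K = e1 + cz q i2 i3 s" using K by (auto simp: e1_def)
      have c: "cz q i2 i3 s $ i1 = 0" "cz q i2 i3 s $ i4 = 0" using cz_props_p4(3)[OF idx(4) s(1)] idx by auto
      define z :: "'k^'n" where "z = axis i4 1"
      have "herm q z z \<noteq> 0" "same_type e1 z u v" "span1 e1 \<noteq> span1 z" "same_type z K u v" "span1 z \<noteq> span1 K"
        using idx h0 s c span1_neq[of e1 i4 z] span1_neq[of K i4 z]
        by (auto simp: z_def e1_def same_type_def hs)
      thus ?thesis unfolding e1_def by blast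
    qed
  next
    case h0: False
    define r where "r = rho q u v"
    have r: "r^q = r" "1 + r \<noteq> 0" using rho_props[OF hu hv h0] by (auto simp: r_def)
    have hee: "herm q e1 e1 = 1" by (simp add: e1_def herm_axis_l_p4)
    show ?thesis
    proof (cases "K = axis i2 1")
      case True
      have "(r - 1)^q = r - 1" using r by (simp add: cj_diff'_p4)
      then obtain al where al: "al * al^q = r - 1" using norm_surj0[OF H] by blast
      define z :: "'k^'n" where "z = e1 + axis i2 1 + axis i3 al"
      have zz: "herm q z z = 1 + r" using idx al by (simp add: z_def e1_def hs algebra_simps)
      have ez: "herm q e1 z = 1" "herm q z e1 = 1" using idx by (simp_all add: z_def e1_def hs)
      have zK: "herm q z K = 1" "herm q K z = 1" "herm q K K = 1" using idx True by (simp_all add: z_def e1_def hs)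
      have "herm q z z \<noteq> 0" using zz r by simp
      moreover have "same_type e1 z u v" using ez zz h0 hee by (simp add: same_type_def rho_def_p4 r_def)
      moreover have "same_type z K u v" using zK zz h0 by (simp add: same_type_def rho_def_p4 r_def)
      moreover have "span1 e1 \<noteq> span1 z" using idx span1_neq[of e1 i2 z] by (simp add: z_def e1_def)
      moreover have "span1 z \<noteq> span1 K" using idx True span1_neq[of K i1 z] by (simp add: z_def e1_def)
      ultimately show ?thesis unfolding e1_def by blast
    next
      case False
      then obtain s where s: "s^q = s" "1 + s \<noteq> 0" "K = e1 + cz q i2 i3 s" using K by (auto simp: e1_def)
      have c: "herm q (cz q i2 i3 s) (cz q i2 i3 s) = s" "cz q i2 i3 s $ i1 = 0" "cz q i2 i3 s $ i4 = 0"
        "cz q i2 i3 s $ i2 \<noteq> 0"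
        using cz_props_p4[OF idx(4) s(1)] cz_i2[OF idx(4) s(1)] idx by auto
      have KK: "herm q K K = 1 + s" using c s(3) hee by (simp add: hs e1_def)
      have eK: "herm q e1 K = 1" "herm q K e1 = 1" using c s(3) hee by (simp_all add: hs e1_def)
      show ?thesis
      proof (cases "s = r")
        case True
        have "same_type e1 K u v" using eK KK h0 hee True by (simp add: same_type_def rho_def_p4 r_def)
        moreover have "span1 e1 \<noteq> span1 K" using idx c s(3) span1_neq[of e1 i2 K] by (simp add: e1_def)
        ultimately show ?thesis unfolding e1_def by blast
      next
        case sr: False
        show ?thesis
        proof (cases "s = 0")
          case s0: True
          hence r0: "r \<noteq> 0" using sr by simp
          obtain al where al: "al * al^q = r" using norm_surj0[OF H r(1)] by blast
          have al0: "al \<noteq> 0" using al r0 by auto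
          have Ke: "K = e1 + axis i2 1 + axis i3 (om q)" using s(3) s0 by (simp add: cz_def_p4)
          define z :: "'k^'n" where "z = e1 + axis i4 al"
          have zz: "herm q z z = 1 + r" using idx al by (simp add: z_def e1_def hs algebra_simps)
          have ez: "herm q e1 z = 1" "herm q z e1 = 1" using idx by (simp_all add: z_def e1_def hs)
          have zK: "herm q z K = 1" "herm q K z = 1" using idx by (simp_all add: Ke z_def e1_def hs)
          have "herm q z z \<noteq> 0" using zz r by simp
          moreover have "same_type e1 z u v" using ez zz h0 hee by (simp add: same_type_def rho_def_p4 r_def)
          moreover have "same_type z K u v" using zK zz h0 KK s0 by (simp add: same_type_def rho_def_p4 r_def)
          moreover have "span1 e1 \<noteq> span1 z" using idx al0 span1_neq[of e1 i4 z] by (simp add: z_def e1_def)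
          moreover have "span1 z \<noteq> span1 K" using idx span1_neq[of z i2 K] by (simp add: Ke z_def e1_def)
          ultimately show ?thesis unfolding e1_def by blast
        next
          case s0: False
          define g where "g = gam q s"
          have g: "g * g^q = s" "g \<noteq> 0" using gam_p4[OF s0 s(1)] by (auto simp: g_def)
          have gq: "g^q \<noteq> 0" using g(2) cj_eq0'_p4 by simp
          have Ke: "K = e1 + axis i2 g" using s(3) s0 by (simp add: cz_def_p4 g_def)
          have "(1 + s)^q = 1 + s" using s(1) by (simp add: cj_add'_p4)
          then obtain la where la: "la * la^q = 1 + s" using norm_surj[OF H s(2)] by blast
          have la0: "la \<noteq> 0" using la s(2) by auto
          define be where "be = (la - 1) / g^q"
          have beg: "be * g^q = la - 1" using gq by (simp add: be_def)
          have "(r - be * be^q)^q = r - be * be^q" using r(1) nm_fixed'_p4[of be] by (simp add: cj_diff'_p4)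
          then obtain al where al: "al * al^q = r - be * be^q" using norm_surj0[OF H] by blast
          define z :: "'k^'n" where "z = e1 + axis i2 be + axis i3 al"
          have zz: "herm q z z = 1 + r" using idx al by (simp add: z_def e1_def hs algebra_simps)
          have ez: "herm q e1 z = 1" "herm q z e1 = 1" using idx by (simp_all add: z_def e1_def hs)
          have zK: "herm q z K = la" using idx beg by (simp add: Ke z_def e1_def hs)
          hence Kz: "herm q K z = la^q" using herm_sym_p4[of K z] by simp
          have "herm q z z \<noteq> 0" using zz r by simp
          moreover have "same_type e1 z u v" using ez zz h0 hee by (simp add: same_type_def rho_def_p4 r_def)
          moreover have "same_type z K u v"
            using zK Kz zz h0 KK la la0 s(2) by (simp add: same_type_def rho_def_p4 r_def)
          moreover have "span1 e1 \<noteq> span1 z"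
          proof (cases "be = 0")
            case True
            hence "la = 1" using beg by simp
            hence "al \<noteq> 0" using la al True s0 r sr by auto
            thus ?thesis using idx span1_neq[of e1 i3 z] by (simp add: z_def e1_def)
          next
            case False
            thus ?thesis using idx span1_neq[of e1 i2 z] by (simp add: z_def e1_def)
          qed
          moreover have "span1 z \<noteq> span1 K"
          proof
            assume "span1 z = span1 K"
            then obtain c where cK: "K = c *s z" using span1_eqD by blast
            have "K $ i1 = c * z $ i1" using cK by simp
            hence "c = 1" using idx by (simp add: Ke z_def e1_def)
            hence "K $ i2 = z $ i2" "K $ i3 = z $ i3" using cK by simp_all
            hence "be = g" "al = 0" using idx by (simp_all add: Ke z_def e1_def)
            hence "r = s" using al g by simp
            thus False using sr by simp
          qed
          ultimately show ?thesis unfolding e1_def by blast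
        qed
      qed
    qed
  qed
qed

end


lemma reach1: "reach E (Suc 0) x y \<longleftrightarrow> {x, y} \<in> E" by auto
lemma reach2: "{x, z} \<in> E \<Longrightarrow> {z, y} \<in> E \<Longrightarrow> reach E 2 x y"
  by (auto simp: numeral_2_eq_2)

lemma gdist_le: "reach E k x y \<Longrightarrow> k \<le> 2 \<Longrightarrow> gdist E x y \<le> 2"
proof -
  assume r: "reach E k x y" and k: "k \<le> 2"
  have "(LEAST k. reach E k x y) \<le> k" by (rule Least_le[of "\<lambda>k. reach E k x y", OF r])
  hence "(LEAST k. reach E k x y) \<le> 2" using k by simp
  thus ?thesis using r unfolding gdist_def
    by (auto simp: numeral_eq_enat)
qed

lemma gdist_ge:
  assumes "x \<noteq> y" "{x, y} \<notin> E"
  shows "gdist E x y \<ge> 2"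
proof (cases "\<exists>k. reach E k x y")
  case True
  have "reach E (LEAST k. reach E k x y) x y" using True by (rule LeastI_ex)
  moreover have "\<not> reach E 0 x y" "\<not> reach E (Suc 0) x y" using assms by auto
  ultimately have "(LEAST k. reach E k x y) \<noteq> 0" "(LEAST k. reach E k x y) \<noteq> Suc 0" by metis+
  hence "(LEAST k. reach E k x y) \<ge> 2" by linarith
  thus ?thesis using True unfolding gdist_def by (simp add: numeral_eq_enat)
next
  case False thus ?thesis by (simp add: gdist_def)
qed

lemma induced_pair: "P \<in> X \<Longrightarrow> Q \<in> X \<Longrightarrow> induced X g ` {P, Q} = {g ` P, g ` Q}"
  by (simp add: induced_def)

context
  fixes q :: nat
  assumes H: "Hq TYPE('k::{field,finite}) q"
begin

lemmas herm_axis_r_p5 = herm_axis_r[OF H] and herm_axis_l_p5 = herm_axis_l[OF H]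
  and axis_idx_p5 = axis_idx[OF H] and herm_add_left_p5 = herm_add_left[OF H] and herm_add_right_p5 = herm_add_right[OF H]
  and cj_0'_p5 = cj_0[OF H] and sumat_def_p5 = sumat_def[OF H] and unitary_def_p5 = unitary_def[OF H]
  and canon_p5 = canon[OF H] and same_type_Kp_p5 = same_type_Kp[OF H] and K_nondeg_p5 = K_nondeg[OF H]
  and sumat_adj_p5 = sumat_adj[OF H] and core_p5 = core[OF H] and Kp_cases_p5 = Kp_cases[OF H]
  and rho_props_p5 = rho_props[OF H] and om_p5 = om[OF H]

lemma span1_X: "herm q (v::'k^'n) v \<noteq> 0 \<Longrightarrow> span1 v \<in> nondeg_points q"
  by (auto simp: nondeg_points_def)

lemma X_rep: "P \<in> nondeg_points q \<Longrightarrow> \<exists>v::'k^'n. P = span1 v \<and> herm q v v \<noteq> 0"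
  by (auto simp: nondeg_points_def)

lemma gm_SU: "sumat q (A::'k^'n^'n) \<Longrightarrow> (\<lambda>v. A *v v) \<in> SU q"
  unfolding SU_def sumat_def_p5 unitary_def_p5 by blast

lemma e1_nondeg: "herm q (axis i 1 :: 'k^'n) (axis i 1) \<noteq> 0"
  by (simp add: herm_axis_l_p5 axis_idx_p5)

context
  fixes G :: "(('k^'n) set \<Rightarrow> ('k^'n) set) set"
  assumes comp: "\<forall>a\<in>G. \<forall>b\<in>G. a \<circ> b \<in> G"
    and SUG: "induced (nondeg_points q) ` SU q \<subseteq> G"
begin

lemma indG: "sumat q A \<Longrightarrow> induced (nondeg_points q) (\<lambda>v. A *v v) \<in> G"
  using SUG gm_SU by blast

lemma orbit_closed:
  assumes "S \<in> {h ` A0 | h. h \<in> G}" "g \<in> G"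
  shows "g ` S \<in> {h ` A0 | h. h \<in> G}"
proof -
  obtain h where "h \<in> G" "S = h ` A0" using assms(1) by blast
  hence "g ` S = (g \<circ> h) ` A0" "g \<circ> h \<in> G" using comp assms(2) by (auto simp: image_comp)
  thus ?thesis by blast
qed

lemma orbit_map:
  assumes "{span1 a, span1 b} \<in> {h ` A0 | h. h \<in> G}" "sumat q A"
    "herm q a a \<noteq> 0" "herm q b b \<noteq> 0"
  shows "{span1 (A *v a), span1 (A *v b)} \<in> {h ` A0 | h. h \<in> G}"
proof -
  have "induced (nondeg_points q) (\<lambda>v. A *v v) ` {span1 a, span1 b} = {span1 (A *v a), span1 (A *v b)}"
    using assms(3,4) by (simp add: induced_def span1_X gm_span1)
  thus ?thesis using orbit_closed[OF assms(1) indG[OF assms(2)]] by simp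
qed

lemma edge:
  fixes u v a b :: "'k^'n" and i1 i2 i3 i4 :: 'n
  assumes idx: "i1 \<noteq> i2" "i1 \<noteq> i3" "i1 \<noteq> i4" "i2 \<noteq> i3" "i2 \<noteq> i4" "i3 \<noteq> i4"
    and hu: "herm q u u \<noteq> 0" and hv: "herm q v v \<noteq> 0" and uv: "span1 u \<noteq> span1 v"
    and ha: "herm q a a \<noteq> 0" and hb: "herm q b b \<noteq> 0" and ab: "span1 a \<noteq> span1 b"
    and st: "same_type q a b u v"
  shows "{span1 a, span1 b} \<in> {h ` {span1 u, span1 v} | h. h \<in> G}"
proof -
  define K where "K = Kp q i1 i2 i3 u v"
  have KK: "Kp q i1 i2 i3 a b = K" using same_type_Kp_p5[OF st] by (simp add: K_def)
  obtain A where A: "sumat q A" "span1 (A *v axis i1 1) = span1 a" "span1 (A *v K) = span1 b"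
    using canon_p5[OF idx ha hb ab] KK by blast
  obtain B where B: "sumat q B" "span1 (B *v axis i1 1) = span1 u" "span1 (B *v K) = span1 v"
    using canon_p5[OF idx hu hv uv] by (auto simp: K_def)
  define C where "C = adjm q B"
  have C: "sumat q C" "C *v (B *v axis i1 1) = axis i1 1" "C *v (B *v K) = K"
    using sumat_adj_p5[OF B(1)] by (auto simp: C_def)
  have hK: "herm q K K \<noteq> 0" using K_nondeg_p5[OF hu hv idx(1,2,4)] by (simp add: K_def)
  define X where "X = (nondeg_points q :: ('k^'n) set set)"
  define h where "h = induced X (\<lambda>w. A *v w) \<circ> induced X (\<lambda>w. C *v w)"
  have hG: "h \<in> G" unfolding h_def X_def using comp indG[OF A(1)] indG[OF C(1)] by blast
  have uX: "span1 u \<in> X" "span1 v \<in> X" using hu hv by (simp_all add: X_def span1_X)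
  have "induced X (\<lambda>w. C *v w) (span1 u) = (\<lambda>w. C *v w) ` span1 (B *v axis i1 1)"
    using uX B(2) by (simp add: induced_def)
  also have "\<dots> = span1 (axis i1 1)" by (simp add: gm_span1 C(2))
  finally have 1: "induced X (\<lambda>w. C *v w) (span1 u) = span1 (axis i1 1)" .
  have "induced X (\<lambda>w. C *v w) (span1 v) = (\<lambda>w. C *v w) ` span1 (B *v K)"
    using uX B(3) by (simp add: induced_def)
  also have "\<dots> = span1 K" by (simp add: gm_span1 C(3))
  finally have 2: "induced X (\<lambda>w. C *v w) (span1 v) = span1 K" .
  have "h ` {span1 u, span1 v} = {span1 a, span1 b}"
    using e1_nondeg[of i1] hK A(2,3) 1 2
    by (simp add: h_def induced_def X_def span1_X gm_span1)
  thus ?thesis using hG by blast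
qed

lemma ub:
  fixes u v :: "'k^'n" and i1 i2 i3 i4 :: 'n
  assumes idx: "i1 \<noteq> i2" "i1 \<noteq> i3" "i1 \<noteq> i4" "i2 \<noteq> i3" "i2 \<noteq> i4" "i3 \<noteq> i4"
    and hu: "herm q u u \<noteq> 0" and hv: "herm q v v \<noteq> 0" and uv: "span1 u \<noteq> span1 v"
    and E: "E = {h ` {span1 u, span1 v} | h. h \<in> G}"
    and x: "x \<in> nondeg_points q" and y: "y \<in> nondeg_points q"
  shows "gdist E x y \<le> 2"
proof (cases "x = y")
  case True thus ?thesis by (intro gdist_le[of E 0]) auto
next
  case False
  obtain a :: "'k^'n" where a: "x = span1 a" "herm q a a \<noteq> 0" using X_rep[OF x] by blast
  obtain b :: "'k^'n" where b: "y = span1 b" "herm q b b \<noteq> 0" using X_rep[OF y] by blast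
  have ab: "span1 a \<noteq> span1 b" using False a b by simp
  define K where "K = Kp q i1 i2 i3 a b"
  obtain A where A: "sumat q A" "span1 (A *v axis i1 1) = x" "span1 (A *v K) = y"
    using canon_p5[OF idx a(2) b(2) ab] a b by (auto simp: K_def)
  have hK: "herm q K K \<noteq> 0" using K_nondeg_p5[OF a(2) b(2) idx(1,2,4)] by (simp add: K_def)
  have Kc: "K = axis i2 1 \<or> (\<exists>s. s^q = s \<and> 1 + s \<noteq> 0 \<and> K = axis i1 1 + cz q i2 i3 s)"
    using Kp_cases_p5[OF a(2) b(2), of i1 i2 i3] rho_props_p5[OF a(2) b(2)] by (auto simp: K_def)
  have e1: "herm q (axis i1 1 :: 'k^'n) (axis i1 1) \<noteq> 0" by (rule e1_nondeg)
  from core_p5[OF idx hu hv Kc] show ?thesis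
  proof
    assume c: "same_type q (axis i1 1) K u v \<and> span1 (axis i1 1) \<noteq> span1 K"
    have "{span1 (axis i1 1), span1 K} \<in> E"
      using edge[OF idx hu hv uv e1 hK] c E by blast
    hence "{span1 (A *v axis i1 1), span1 (A *v K)} \<in> E"
      unfolding E by (rule orbit_map[OF _ A(1) e1 hK])
    hence "{x, y} \<in> E" using A(2,3) by simp
    thus ?thesis by (intro gdist_le[of E 1]) auto
  next
    assume "\<exists>z. herm q z z \<noteq> 0 \<and> same_type q (axis i1 1) z u v \<and> span1 (axis i1 1) \<noteq> span1 z \<and>
         same_type q z K u v \<and> span1 z \<noteq> span1 K"
    then obtain z where z: "herm q z z \<noteq> 0" "same_type q (axis i1 1) z u v" "span1 (axis i1 1) \<noteq> span1 z"
         "same_type q z K u v" "span1 z \<noteq> span1 K" by blast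
    have "{span1 (axis i1 1), span1 z} \<in> E" using edge[OF idx hu hv uv e1 z(1) z(3) z(2)] E by blast
    hence "{span1 (A *v axis i1 1), span1 (A *v z)} \<in> E"
      unfolding E by (rule orbit_map[OF _ A(1) e1 z(1)])
    hence 1: "{x, span1 (A *v z)} \<in> E" using A(2) by simp
    have "{span1 z, span1 K} \<in> E" using edge[OF idx hu hv uv z(1) hK z(5) z(4)] E by blast
    hence "{span1 (A *v z), span1 (A *v K)} \<in> E"
      unfolding E by (rule orbit_map[OF _ A(1) z(1) hK])
    hence 2: "{span1 (A *v z), y} \<in> E" using A(3) by simp
    show ?thesis using reach2[OF 1 2] by (intro gdist_le[of E 2]) auto
  qed
qed

end

lemma not_edge:
  fixes i j :: "'n::finite" and w1 w2 :: "'k^'n" and G :: "(('k^'n) set \<Rightarrow> ('k^'n) set) set"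
  assumes GG: "G \<subseteq> induced (nondeg_points q) ` GammaU q" and g: "g \<in> G"
    and ij: "i \<noteq> j" and w: "herm q w1 w2 \<noteq> 0"
  shows "g ` {span1 (axis i 1), span1 (axis j 1)} \<noteq> {span1 w1, span1 w2}"
proof
  assume eq: "g ` {span1 (axis i 1), span1 (axis j 1)} = {span1 w1, span1 w2}"
  obtain h where h: "h \<in> GammaU q" "g = induced (nondeg_points q) h" using GG g by blast
  obtain M \<sigma> m where hM: "h = (\<lambda>v. M *v (\<chi> i. \<sigma> (v$i)))" "field_aut \<sigma>" "m \<noteq> 0"
    "\<forall>u v. herm q (M *v (\<chi> i. \<sigma> (u$i))) (M *v (\<chi> i. \<sigma> (v$i))) = m * \<sigma> (herm q u v)"
    using h(1) unfolding GammaU_def by blast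
  have s0: "\<sigma> 0 = 0" using hM(2) unfolding field_aut_def by (metis add_0 add_cancel_right_right)
  have hh: "herm q (h u) (h v) = m * \<sigma> (herm q u v)" for u v using hM(1,4) by simp
  have orth: "herm q (h x) (h y) = 0" if xi: "x \<in> span1 (axis i 1)" and yj: "y \<in> span1 (axis j 1)" for x y
  proof -
    obtain c where "x = c *s axis i 1" using xi unfolding span1_alt by auto
    moreover obtain d where "y = d *s axis j 1" using yj unfolding span1_alt by auto
    ultimately have "herm q x y = 0" using ij by (simp add: herm_scale_left[OF H] herm_scale_right[OF H] herm_axis_l_p5 axis_idx_p5 cj_0'_p5)
    thus ?thesis using hh s0 by simp
  qed
  have orth': "herm q (h y) (h x) = 0" if "x \<in> span1 (axis i 1)" "y \<in> span1 (axis j 1)" for x y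
    using orth[OF that] herm_sym[OF H, of "h y" "h x"] cj_0'_p5 by simp
  have X: "span1 (axis i 1 :: 'k^'n) \<in> nondeg_points q" "span1 (axis j 1 :: 'k^'n) \<in> nondeg_points q"
    using span1_X[OF e1_nondeg[of i]] span1_X[OF e1_nondeg[of j]] by simp_all
  have "{h ` span1 (axis i 1), h ` span1 (axis j 1)} = {span1 w1, span1 w2}"
    using eq X by (simp add: h(2) induced_def)
  hence "(h ` span1 (axis i 1) = span1 w1 \<and> h ` span1 (axis j 1) = span1 w2) \<or>
         (h ` span1 (axis i 1) = span1 w2 \<and> h ` span1 (axis j 1) = span1 w1)"
    by (simp add: doubleton_eq_iff)
  thus False
  proof
    assume c: "h ` span1 (axis i 1) = span1 w1 \<and> h ` span1 (axis j 1) = span1 w2"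
    obtain x y where "x \<in> span1 (axis i 1)" "w1 = h x" "y \<in> span1 (axis j 1)" "w2 = h y"
      using c span1_self[of w1] span1_self[of w2] by (metis imageE)
    thus False using orth w by simp
  next
    assume c: "h ` span1 (axis i 1) = span1 w2 \<and> h ` span1 (axis j 1) = span1 w1"
    obtain x y where "x \<in> span1 (axis i 1)" "w2 = h x" "y \<in> span1 (axis j 1)" "w1 = h y"
      using c span1_self[of w1] span1_self[of w2] by (metis imageE)
    thus False using orth' w by simp
  qed
qed

end


theorem mainTheorem10:
  fixes G :: "((('k::{field,finite})^'n) set \<Rightarrow> ('k^'n) set) set"
    and p e q :: nat
  assumes "prime p" and "e \<ge> 1" and "q = p ^ e"
    and "CARD('k) = q ^ 2"
    and "CARD('n) \<ge> 5"
    and "id \<in> G" and "\<forall>a\<in>G. \<forall>b\<in>G. a \<circ> b \<in> G"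
    and "induced (nondeg_points q) ` SU q \<subseteq> G"
    and "G \<subseteq> induced (nondeg_points q) ` GammaU q"
    and "primitive_on (nondeg_points q) G"
  shows "action_diam (nondeg_points q) G = 2"
proof -
  have cardk: "CARD('k) = p ^ (e * 2)" using assms(3,4) by (simp add: power_mult)
  have ch: "CHAR('k) = p" by (rule CHAR_eq_p[OF assms(1) cardk])
  have q2: "2 \<le> q"
  proof -
    have "p \<ge> 2" using assms(1) by (rule prime_ge_2_nat)
    moreover have "p \<le> p ^ e" using assms(2) \<open>p \<ge> 2\<close> by (simp add: self_le_power)
    ultimately show ?thesis using assms(3) by simp
  qed
  have H: "Hq TYPE('k) q" unfolding Hq_def
  proof (intro conjI allI)
    show "CARD('k) = q^2" by (rule assms(4))
    show "2 \<le> q" by (rule q2)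
    fix x y :: 'k
    show "(x + y)^q = x^q + y^q"
      by (rule freshmans_dream') (use ch assms(1,3) in auto)
  qed
  obtain xs :: "'n list" where xs: "set xs = UNIV" "distinct xs"
    using finite_distinct_list[of "UNIV :: 'n set"] by auto
  have lx: "length xs \<ge> 5" using xs assms(5) by (metis distinct_card)
  define i1 where "i1 = xs ! 0"
  define i2 where "i2 = xs ! 1"
  define i3 where "i3 = xs ! 2"
  define i4 where "i4 = xs ! 3"
  have idx: "i1 \<noteq> i2" "i1 \<noteq> i3" "i1 \<noteq> i4" "i2 \<noteq> i3" "i2 \<noteq> i4" "i3 \<noteq> i4"
  proof -
    have dn: "xs ! a \<noteq> xs ! b" if "a < 5" "b < 5" "a \<noteq> b" for a b
      using that lx xs(2) nth_eq_iff_index_eq by (metis order_less_le_trans)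
    show "i1 \<noteq> i2" "i1 \<noteq> i3" "i1 \<noteq> i4" "i2 \<noteq> i3" "i2 \<noteq> i4" "i3 \<noteq> i4"
      unfolding i1_def i2_def i3_def i4_def by (rule dn; simp)+
  qed
  define X where "X = (nondeg_points q :: ('k^'n) set set)"
  have ax: "axis i c $ j = (if j = i then c else 0)" for i j :: 'n and c :: 'k by (rule axis_idx[OF H])
  note hs = herm_add_left[OF H] herm_add_right[OF H] herm_axis_l[OF H] herm_axis_r[OF H] cj_0[OF H] ax
  have le: "graph_diam X E \<le> 2" if E: "E \<in> orbital_edge_sets X G" for E
  proof -
    obtain A where A: "E = {g ` A | g. g \<in> G}" "A \<subseteq> X" "card A = 2"
      using E unfolding orbital_edge_sets_def by blast
    obtain P Q where PQ: "A = {P, Q}" "P \<noteq> Q" using A(3) card_2_iff[of A] by blast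
    have PX: "P \<in> nondeg_points q" "Q \<in> nondeg_points q" using A(2) PQ(1) X_def by auto
    obtain u :: "'k^'n" where u: "P = span1 u" "herm q u u \<noteq> 0" using X_rep[OF H PX(1)] by blast
    obtain v :: "'k^'n" where v: "Q = span1 v" "herm q v v \<noteq> 0" using X_rep[OF H PX(2)] by blast
    have Ed: "E = {h ` {span1 u, span1 v} | h. h \<in> G}" using A(1) PQ(1) u v by simp
    have "gdist E x y \<le> 2" if "x \<in> X" "y \<in> X" for x y
      using ub[OF H assms(7,8) idx u(2) v(2) _ Ed] PQ u v that X_def by auto
    thus ?thesis unfolding graph_diam_def by (intro SUP_least) auto
  qed
  define e1 :: "'k^'n" where "e1 = axis i1 1"
  define e2 :: "'k^'n" where "e2 = axis i2 1"
  define w0 :: "'k^'n" where "w0 = e1 + e2 + axis i3 (om q)"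
  define E0 where "E0 = {g ` {span1 e1, span1 e2} | g. g \<in> G}"
  have n1: "herm q e1 e1 \<noteq> 0" "herm q e2 e2 \<noteq> 0" using e1_nondeg[OF H] by (auto simp: e1_def e2_def)
  have hw: "herm q w0 w0 = 1" using idx om[OF H] by (simp add: w0_def e1_def e2_def hs)
  have hew: "herm q e1 w0 = 1" using idx by (simp add: w0_def e1_def e2_def hs)
  have d12: "span1 e1 \<noteq> span1 e2" using span1_neq[of e1 i2 e2] idx by (simp add: e1_def e2_def ax)
  have d1w: "span1 e1 \<noteq> span1 w0" using span1_neq[of e1 i2 w0] idx by (simp add: e1_def e2_def w0_def ax)
  have E0o: "E0 \<in> orbital_edge_sets X G"
  proof -
    have "{span1 e1, span1 e2} \<subseteq> X" "card {span1 e1, span1 e2} = 2"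
      using span1_X[OF H n1(1)] span1_X[OF H n1(2)] d12 X_def by auto
    thus ?thesis unfolding orbital_edge_sets_def E0_def by blast
  qed
  have x0: "span1 e1 \<in> X" "span1 w0 \<in> X" using span1_X[OF H n1(1)] span1_X[OF H, of w0] hw X_def by auto
  have ne: "{span1 e1, span1 w0} \<notin> E0"
  proof
    assume "{span1 e1, span1 w0} \<in> E0"
    then obtain g where g: "g \<in> G" "{span1 e1, span1 w0} = g ` {span1 e1, span1 e2}" by (auto simp: E0_def)
    show False using not_edge[OF H assms(9) g(1) idx(1), of e1 w0] g(2) hew by (simp add: e1_def e2_def)
  qed
  have "gdist E0 (span1 e1) (span1 w0) \<ge> 2" by (rule gdist_ge[OF d1w ne])
  hence "graph_diam X E0 \<ge> 2" unfolding graph_diam_def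
    using x0 by (meson SUP_upper2)
  hence ge: "action_diam X G \<ge> 2" unfolding action_diam_def using E0o by (meson SUP_upper2)
  have "action_diam X G \<le> 2" unfolding action_diam_def using le by (intro SUP_least) auto
  thus ?thesis using ge X_def by simp
qed


end
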